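(* Let $P$ be an orthogonal polygon without holes, let $\eta\in\mathbb{N}$, and let $S$ be a maximal square of $P$ with side length $d$ such that: the top and bottom sides of $S$ overlap with horizontal edges $e_1$ and $e_2$ of $P$ respectively; $e_1$ contains the top-right corner of $S$; $e_2$ contains the bottom-right corner of $S$; and there is a strip $Y$ between $e_1$ and $e_2$ whose right side is at distance more than $\eta d$ from the right side of $S$. Let $R$ be the rec-pack of width $d$ and strength $\eta$ whose vertical sides have length $d$ and horizontal sides have length $\eta d$, and whose left side coincides with the right side of $S$. If $\mathcal{R}$ is a partial solution with $S\in\mathcal{R}$ such that $R$ does not overlap any rec-pack in $\mathcal{R}$, then $\mathcal{R}\cup\{R\}$ is also a partial solution.
   Context: $P$ is a simple polygon with integer vertex coordinates and axis-parallel edges. A valid square is an axis-parallel square contained in $P$; it is maximal if no larger-area valid square contains it. A strip of $P$ is a maximal axis-parallel non-square rectangular region inside $P$ each of whose two longer sides is completely contained in an edge of $P$. A rec-pack is an axis-parallel rectangle contained in $P$ of dimensions $t\times \eta t$ or $\eta t\times t$ with $\eta\in\mathbb{N}$ ($t$ is its width, $\eta$ its strength); every valid square is a rec-pack; its extraction $\mathsf{ext}(R)$ is the set of the $\eta$ side-$t$ squares tiling $R$. A set $\mathcal{R}'$ of rec-packs is a minimum covering of $P$ if $\bigcup_{R\in\mathcal{R}'}\mathsf{ext}(R)$ is a minimum-cardinality set of valid squares with union $P$ and distinct rec-packs have disjoint extractions. A partial solution is a set of rec-packs contained in some minimum covering. *)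

theory Defs
  imports "HOL-Analysis.Analysis"
begin

type_synonym pt = "real \<times> real"

definition vpt :: "(int \<times> int) list \<Rightarrow> nat \<Rightarrow> pt" where
  "vpt vs i = (real_of_int (fst (vs ! (i mod length vs))), real_of_int (snd (vs ! (i mod length vs))))"

fun polypath :: "pt list \<Rightarrow> real \<Rightarrow> pt" where
  "polypath [] = linepath 0 0"
| "polypath [a] = linepath a a"
| "polypath [a, b] = linepath a b"
| "polypath (a # b # c # rest) = linepath a b +++ polypath (b # c # rest)"

definition boundary_path :: "(int \<times> int) list \<Rightarrow> real \<Rightarrow> pt" where
  "boundary_path vs = polypath (map (vpt vs) [0..<length vs] @ [vpt vs 0])"

definition edge :: "(int \<times> int) list \<Rightarrow> nat \<Rightarrow> pt set" where
  "edge vs i = closed_segment (vpt vs i) (vpt vs (Suc i))"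

definition horiz_edge :: "(int \<times> int) list \<Rightarrow> nat \<Rightarrow> bool" where
  "horiz_edge vs i \<longleftrightarrow> snd (vpt vs i) = snd (vpt vs (Suc i)) \<and> fst (vpt vs i) \<noteq> fst (vpt vs (Suc i))"

definition vert_edge :: "(int \<times> int) list \<Rightarrow> nat \<Rightarrow> bool" where
  "vert_edge vs i \<longleftrightarrow> fst (vpt vs i) = fst (vpt vs (Suc i)) \<and> snd (vpt vs i) \<noteq> snd (vpt vs (Suc i))"

text \<open>A simple polygon (hence without holes) with integer vertices and axis-parallel edges;
  consecutive edges alternate between horizontal and vertical, so the listed edges are
  exactly the (maximal) edges of the polygon.\<close>
definition ortho_polygon :: "(int \<times> int) list \<Rightarrow> bool" where
  "ortho_polygon vs \<longleftrightarrow> length vs \<ge> 4 \<and> simple_path (boundary_path vs) \<and>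
     (\<forall>i < length vs. (horiz_edge vs i \<and> vert_edge vs (Suc i)) \<or> (vert_edge vs i \<and> horiz_edge vs (Suc i)))"

definition region :: "(int \<times> int) list \<Rightarrow> pt set" where
  "region vs = path_image (boundary_path vs) \<union> inside (path_image (boundary_path vs))"

definition sq :: "real \<Rightarrow> real \<Rightarrow> real \<Rightarrow> pt set" where
  "sq x y s = cbox (x, y) (x + s, y + s)"

definition valid_square :: "pt set \<Rightarrow> pt set \<Rightarrow> bool" where
  "valid_square P Q \<longleftrightarrow> (\<exists>x y s. s > 0 \<and> Q = sq x y s) \<and> Q \<subseteq> P"

definition maximal_square :: "pt set \<Rightarrow> pt set \<Rightarrow> bool" where
  "maximal_square P Q \<longleftrightarrow> valid_square P Q \<and>
     \<not> (\<exists>Q'. valid_square P Q' \<and> Q \<subseteq> Q' \<and> measure lebesgue Q' > measure lebesgue Q)"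

definition seg_overlap :: "pt set \<Rightarrow> pt set \<Rightarrow> bool" where
  "seg_overlap A B \<longleftrightarrow> (\<exists>p q. p \<noteq> q \<and> p \<in> A \<inter> B \<and> q \<in> A \<inter> B)"

definition strip_candidate :: "(int \<times> int) list \<Rightarrow> pt set \<Rightarrow> bool" where
  "strip_candidate vs Y \<longleftrightarrow> Y \<subseteq> region vs \<and>
     (\<exists>a b c e. a < c \<and> b < e \<and> Y = cbox (a, b) (c, e) \<and>
        ((c - a > e - b \<and> (\<exists>i<length vs. closed_segment (a, e) (c, e) \<subseteq> edge vs i)
                        \<and> (\<exists>j<length vs. closed_segment (a, b) (c, b) \<subseteq> edge vs j))
       \<or> (e - b > c - a \<and> (\<exists>i<length vs. closed_segment (a, b) (a, e) \<subseteq> edge vs i)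
                        \<and> (\<exists>j<length vs. closed_segment (c, b) (c, e) \<subseteq> edge vs j))))"

definition strip :: "(int \<times> int) list \<Rightarrow> pt set \<Rightarrow> bool" where
  "strip vs Y \<longleftrightarrow> strip_candidate vs Y \<and> \<not> (\<exists>Y'. strip_candidate vs Y' \<and> Y \<subset> Y')"

definition recpack :: "pt set \<Rightarrow> pt set \<Rightarrow> bool" where
  "recpack P R \<longleftrightarrow> R \<subseteq> P \<and>
     (\<exists>a b t (k::nat). t > 0 \<and> k \<ge> 1 \<and>
        (R = cbox (a, b) (a + real k * t, b + t) \<or> R = cbox (a, b) (a + t, b + real k * t)))"

definition ext :: "pt set \<Rightarrow> pt set set" where
  "ext R = {Q. \<exists>a b t (k::nat) (i::nat). t > 0 \<and> k \<ge> 1 \<and> i < k \<and>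
     ((R = cbox (a, b) (a + real k * t, b + t) \<and> Q = sq (a + real i * t) b t)
    \<or> (R = cbox (a, b) (a + t, b + real k * t) \<and> Q = sq a (b + real i * t) t))}"

definition min_square_cover :: "pt set \<Rightarrow> pt set set \<Rightarrow> bool" where
  "min_square_cover P U \<longleftrightarrow> finite U \<and> (\<forall>Q\<in>U. valid_square P Q) \<and> \<Union>U = P \<and>
     (\<forall>V. finite V \<and> (\<forall>Q\<in>V. valid_square P Q) \<and> \<Union>V = P \<longrightarrow> card U \<le> card V)"

definition min_covering :: "pt set \<Rightarrow> pt set set \<Rightarrow> bool" where
  "min_covering P Rs \<longleftrightarrow> (\<forall>R\<in>Rs. recpack P R) \<and>
     (\<forall>R\<in>Rs. \<forall>R'\<in>Rs. R \<noteq> R' \<longrightarrow> ext R \<inter> ext R' = {}) \<and>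
     min_square_cover P (\<Union>R\<in>Rs. ext R)"

definition partial_solution :: "pt set \<Rightarrow> pt set set \<Rightarrow> bool" where
  "partial_solution P Rs \<longleftrightarrow> (\<exists>Rs'. min_covering P Rs' \<and> Rs \<subseteq> Rs')"

definition overlaps :: "pt set \<Rightarrow> pt set \<Rightarrow> bool" where
  "overlaps A B \<longleftrightarrow> interior A \<inter> interior B \<noteq> {}"

end

theory Submission
  imports Defs
begin

lemma curve_not_interior:
  fixes g :: "real \<Rightarrow> real \<times> real"
  assumes sp: "simple_path g" and lp: "pathfinish g = pathstart g" and p: "p \<in> path_image g"
  shows "p \<notin> interior (path_image g \<union> inside (path_image g))"
proof
  let ?C = "path_image g"
  assume pin: "p \<in> interior (?C \<union> inside ?C)"
  have h1: "?C homeomorphic sphere (0::complex) 1"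
    using homeomorphic_simple_path_image_circle[OF sp lp, of 1] by simp
  have h2: "sphere (0::complex) 1 homeomorphic sphere (0::real\<times>real) 1"
    by (rule homeomorphic_spheres_gen) auto
  have hom: "?C homeomorphic sphere (0::real\<times>real) 1"
    using homeomorphic_trans[OF h1 h2] .
  have bC: "bounded ?C" using bounded_simple_path_image sp by blast
  obtain z where z: "z \<in> outside ?C" using outside_bounded_nonempty[OF bC] by blast
  define T where "T = connected_component_set (- ?C) z"
  have zC: "z \<in> - ?C" using z by (simp add: outside_def)
  have Tc: "T \<in> components (- ?C)" unfolding T_def components_iff using zC by blast
  have fr: "frontier T = ?C"
    by (rule Jordan_Brouwer_frontier[OF hom Tc]) simp
  have Tout: "T \<subseteq> outside ?C"
  proof
    fix w assume w: "w \<in> T"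
    then have "connected_component_set (- ?C) w = T"
      unfolding T_def by (metis connected_component_eq mem_Collect_eq)
    moreover have "w \<in> - ?C" using w Tc in_components_subset by blast
    ultimately show "w \<in> outside ?C" using z unfolding outside_def T_def by auto
  qed
  obtain e where e: "e > 0" "ball p e \<subseteq> ?C \<union> inside ?C"
    using pin by (meson mem_interior)
  have "p \<in> closure T" using fr p by (auto simp: frontier_def)
  then obtain w where "w \<in> T" "dist w p < e" using e(1) closure_approachable by blast
  then have "w \<in> ball p e" by (simp add: dist_commute)
  then have "w \<in> ?C \<union> inside ?C" using e(2) by blast
  moreover have "w \<in> outside ?C" using \<open>w \<in> T\<close> Tout by blast
  ultimately show False
    using inside_Int_outside[of ?C] by (auto simp: outside_def)
qed

lemma seg_horiz: "closed_segment (a, h) (b, h) = closed_segment a b \<times> {h::real}"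
proof
  show "closed_segment (a, h) (b, h) \<subseteq> closed_segment a b \<times> {h}"
  proof
    fix z assume z: "z \<in> closed_segment (a, h) (b, h)"
    then have "fst z \<in> closed_segment a b \<and> snd z \<in> closed_segment h h"
      using closed_segment_PairD[of "fst z" "snd z"] z by (metis prod.collapse)
    then show "z \<in> closed_segment a b \<times> {h}" by (cases z) auto
  qed
  show "closed_segment a b \<times> {h} \<subseteq> closed_segment (a, h) (b, h)"
  proof
    fix z assume "z \<in> closed_segment a b \<times> {h}"
    then obtain t where t: "t \<in> closed_segment a b" "z = (t, h)" by auto
    then obtain u where u: "0 \<le> u" "u \<le> 1" "t = (1 - u) *\<^sub>R a + u *\<^sub>R b"
      unfolding closed_segment_def by auto
    have "z = (1 - u) *\<^sub>R (a, h) + u *\<^sub>R (b, h)" using t u by (simp add: algebra_simps)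
    then show "z \<in> closed_segment (a, h) (b, h)" using u unfolding closed_segment_def by blast
  qed
qed

lemma seg_vert: "closed_segment (p, a) (p, b) = {p::real} \<times> closed_segment a (b::real)"
proof
  show "closed_segment (p, a) (p, b) \<subseteq> {p} \<times> closed_segment a b"
  proof
    fix z assume z: "z \<in> closed_segment (p, a) (p, b)"
    then have "fst z \<in> closed_segment p p \<and> snd z \<in> closed_segment a b"
      using closed_segment_PairD[of "fst z" "snd z"] z by (metis prod.collapse)
    then show "z \<in> {p} \<times> closed_segment a b" by (cases z) auto
  qed
  show "{p} \<times> closed_segment a b \<subseteq> closed_segment (p, a) (p, b)"
  proof
    fix z assume "z \<in> {p} \<times> closed_segment a b"
    then obtain t where t: "t \<in> closed_segment a b" "z = (p, t)" by auto
    then obtain u where u: "0 \<le> u" "u \<le> 1" "t = (1 - u) *\<^sub>R a + u *\<^sub>R b"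
      unfolding closed_segment_def by auto
    have "z = (1 - u) *\<^sub>R (p, a) + u *\<^sub>R (p, b)" using t u by (simp add: algebra_simps)
    then show "z \<in> closed_segment (p, a) (p, b)" using u unfolding closed_segment_def by blast
  qed
qed

lemma polypath_props:
  "length l \<ge> 2 \<Longrightarrow> pathstart (polypath l) = hd l \<and> pathfinish (polypath l) = last l \<and>
     path_image (polypath l) = (\<Union>k<length l - 1. closed_segment (l!k) (l!Suc k))"
proof (induction l rule: polypath.induct)
  case (4 a b c rest)
  have IH: "pathstart (polypath (b # c # rest)) = b \<and> pathfinish (polypath (b # c # rest)) = last (c#rest) \<and>
     path_image (polypath (b # c # rest)) = (\<Union>k<length (b#c#rest) - 1. closed_segment ((b # c # rest)!k) ((b # c # rest)!Suc k))"
    using 4 by simp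
  have pi: "path_image (polypath (a # b # c # rest)) = closed_segment a b \<union> path_image (polypath (b # c # rest))"
    using IH by (simp add: path_image_join)
  have "(\<Union>k<length (a#b#c#rest) - 1. closed_segment ((a#b#c#rest)!k) ((a#b#c#rest)!Suc k))
      = closed_segment a b \<union> (\<Union>k<length (b#c#rest) - 1. closed_segment ((b # c # rest)!k) ((b # c # rest)!Suc k))"
    (is "?L = ?R")
  proof
    show "?L \<subseteq> ?R"
    proof
      fix z assume "z \<in> ?L"
      then obtain k where k: "k < length (a#b#c#rest) - 1" "z \<in> closed_segment ((a#b#c#rest)!k) ((a#b#c#rest)!Suc k)" by blast
      show "z \<in> ?R"
      proof (cases k)
        case 0 then show ?thesis using k by simp
      next
        case (Suc k') then show ?thesis using k by auto
      qed
    qed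
    show "?R \<subseteq> ?L"
    proof
      fix z assume "z \<in> ?R"
      then show "z \<in> ?L"
      proof
        assume "z \<in> closed_segment a b" then show ?thesis by (auto intro!: bexI[of _ 0])
      next
        assume "z \<in> (\<Union>k<length (b#c#rest) - 1. closed_segment ((b # c # rest)!k) ((b # c # rest)!Suc k))"
        then obtain k where "k < length (b#c#rest) - 1" "z \<in> closed_segment ((b # c # rest)!k) ((b # c # rest)!Suc k)" by blast
        then show ?thesis by (auto intro!: bexI[of _ "Suc k"])
      qed
    qed
  qed
  then show ?case using IH pi by simp
qed (auto simp: lessThan_Suc)

lemma polypath_arc_disj:
  "arc (polypath l) \<Longrightarrow> length l \<ge> 2 \<Longrightarrow> i < j \<Longrightarrow> j < length l - 1 \<Longrightarrow>
    closed_segment (l!i) (l!Suc i) \<inter> closed_segment (l!j) (l!Suc j) \<subseteq> {l ! Suc i}"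
proof (induction l arbitrary: i j rule: polypath.induct)
  case (4 a b c rest)
  have pp: "pathfinish (linepath a b) = pathstart (polypath (b # c # rest))"
    using polypath_props[of "b#c#rest"] by simp
  have A: "arc (polypath (b # c # rest))" and B: "closed_segment a b \<inter> path_image (polypath (b # c # rest)) \<subseteq> {b}"
    using "4.prems"(1) arc_join_eq[OF pp] polypath_props[of "b#c#rest"] by auto
  show ?case
  proof (cases i)
    case 0
    then obtain j' where j': "j = Suc j'" using "4.prems" by (cases j) auto
    have "closed_segment ((b#c#rest)!j') ((b#c#rest)!Suc j') \<subseteq> path_image (polypath (b # c # rest))"
      using polypath_props[of "b#c#rest"] "4.prems" j' by auto
    then show ?thesis using B 0 j' by auto
  next
    case (Suc i')
    then obtain j' where j': "j = Suc j'" using "4.prems" by (cases j) auto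
    have "closed_segment ((b#c#rest)!i') ((b#c#rest)!Suc i') \<inter> closed_segment ((b#c#rest)!j') ((b#c#rest)!Suc j') \<subseteq> {(b#c#rest) ! Suc i'}"
      using "4.IH"[OF A, of i' j'] "4.prems" Suc j' by simp
    then show ?thesis using Suc j' by simp
  qed
qed auto

lemma vpt_mod: "vpt vs (i mod length vs) = vpt vs i"
  by (simp add: vpt_def)

lemma vpt_add_len: "vpt vs (i + length vs) = vpt vs i"
  by (simp add: vpt_def)

lemma vpt_len: "vpt vs (length vs) = vpt vs 0"
  by (simp add: vpt_def)

lemma edge_add_len: "edge vs (i + length vs) = edge vs i"
  unfolding edge_def using vpt_add_len[of vs i] vpt_add_len[of vs "Suc i"] by simp

lemma edge_mod: "edge vs (i mod length vs) = edge vs i"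
  unfolding edge_def by (metis mod_Suc_eq vpt_mod)

definition bl :: "(int \<times> int) list \<Rightarrow> pt list" where
  "bl vs = map (vpt vs) [0..<length vs] @ [vpt vs 0]"

lemma bl_nth: "k \<le> length vs \<Longrightarrow> bl vs ! k = vpt vs k"
  unfolding bl_def
  by (cases "k = length vs") (auto simp: nth_append vpt_len)

lemma bl_len: "length (bl vs) = Suc (length vs)" by (simp add: bl_def)

lemma bp_props:
  assumes "length vs \<ge> 2"
  shows "pathstart (boundary_path vs) = vpt vs 0" "pathfinish (boundary_path vs) = vpt vs 0"
    "path_image (boundary_path vs) = (\<Union>k<length vs. edge vs k)"
proof -
  have bp: "boundary_path vs = polypath (bl vs)" by (simp add: boundary_path_def bl_def)
  have L: "length (bl vs) \<ge> 2" using assms by (simp add: bl_len)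
  have "0 < length vs" using assms by linarith
  then have "[0..<length vs] = 0 # [1..<length vs]" using upt_conv_Cons by (metis One_nat_def)
  then have "hd (bl vs) = vpt vs 0" unfolding bl_def by simp
  then show "pathstart (boundary_path vs) = vpt vs 0" using polypath_props[OF L] bp by simp
  show "pathfinish (boundary_path vs) = vpt vs 0" using polypath_props[OF L] bp by (simp add: bl_def)
  have "path_image (boundary_path vs) = (\<Union>k<length (bl vs) - 1. closed_segment (bl vs!k) (bl vs!Suc k))"
    using polypath_props[OF L] bp by simp
  also have "\<dots> = (\<Union>k<length vs. edge vs k)"
    by (rule SUP_cong) (auto simp: bl_len bl_nth edge_def)
  finally show "path_image (boundary_path vs) = (\<Union>k<length vs. edge vs k)" .
qed

lemma edge_pw:
  assumes P: "ortho_polygon vs" and ij: "i < j" "j < length vs"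
  shows "edge vs i \<inter> edge vs j \<subseteq> {vpt vs (Suc i)} \<union> (if i = 0 then {vpt vs 0} else {})"
proof -
  let ?l = "bl vs"
  have n4: "length vs \<ge> 4" using P by (simp add: ortho_polygon_def)
  have sp: "simple_path (polypath ?l)" using P by (simp add: ortho_polygon_def boundary_path_def bl_def)
  have l4: "length ?l \<ge> 3" using n4 bl_len[of vs] by simp
  obtain a b c rest where l: "?l = a # b # c # rest"
  proof (cases ?l)
    case (Cons a t1)
    then show ?thesis using l4 that by (cases t1; cases "tl t1") auto
  qed (use l4 in auto)
  let ?r = "b # c # rest"
  have ab: "a = vpt vs 0" "b = vpt vs 1" using bl_nth[of 0 vs] bl_nth[of 1 vs] l n4 by auto
  have lr: "length ?r = length vs" using l bl_len[of vs] by simp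
  have rnth: "k < length vs \<Longrightarrow> ?r ! k = vpt vs (Suc k)" for k
    using bl_nth[of "Suc k" vs] l by simp
  have "last ?l = vpt vs 0" by (simp add: bl_def)
  then have lastr: "last ?r = a" using l ab by simp
  have fin: "pathfinish (polypath ?r) = a"
    using polypath_props[of ?r] lastr by simp
  have st: "pathstart (polypath ?r) = b" using polypath_props[of ?r] by simp
  have pj: "polypath ?l = linepath a b +++ polypath ?r" using l by simp
  have arcr: "arc (polypath ?r)" and ov: "closed_segment a b \<inter> path_image (polypath ?r) \<subseteq> {a, b}"
    using simple_path_join_loop_eq[of "polypath ?r" "linepath a b"] sp pj fin st by auto
  show ?thesis
  proof (cases i)
    case 0
    then obtain j' where j': "j = Suc j'" using ij by (cases j) auto
    have "edge vs j = closed_segment (?r ! j') (?r ! Suc j')"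
      using rnth[of j'] rnth[of "Suc j'"] ij j' by (simp add: edge_def)
    also have "\<dots> \<subseteq> path_image (polypath ?r)"
      using polypath_props[of ?r] lr ij j' by auto
    finally show ?thesis using ov 0 ab by (auto simp: edge_def)
  next
    case (Suc i')
    then obtain j' where j': "j = Suc j'" using ij by (cases j) auto
    have H: "closed_segment (?r!i') (?r!Suc i') \<inter> closed_segment (?r!j') (?r!Suc j') \<subseteq> {?r ! Suc i'}"
      by (rule polypath_arc_disj[OF arcr]) (use lr ij Suc j' in auto)
    have e: "?r!i' = vpt vs i" "?r!Suc i' = vpt vs (Suc i)" "?r!j' = vpt vs j" "?r!Suc j' = vpt vs (Suc j)"
      using rnth[of i'] rnth[of "Suc i'"] rnth[of j'] rnth[of "Suc j'"] Suc j' ij by auto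
    show ?thesis using H unfolding e edge_def using Suc by simp
  qed
qed

lemma edge_unique:
  assumes P: "ortho_polygon vs" and i: "i < length vs" and j: "j < length vs" "j \<noteq> i"
    and zi: "z \<in> edge vs i" and zj: "z \<in> edge vs j"
  shows "z = vpt vs i \<or> z = vpt vs (Suc i)"
proof (rule ccontr)
  assume nz: "\<not> (z = vpt vs i \<or> z = vpt vs (Suc i))"
  let ?n = "length vs"
  define J where "J = {j. j < ?n \<and> j \<noteq> i \<and> z \<in> edge vs j}"
  have jJ: "j \<in> J" using j zj by (simp add: J_def)
  have finJ: "finite J" by (simp add: J_def)
  have big: "\<not> i < k" if "k \<in> J" for k
  proof
    assume "i < k"
    then show False using edge_pw[OF P \<open>i < k\<close>] that zi nz by (auto simp: J_def split: if_splits)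
  qed
  define m where "m = Max J"
  have mJ: "m \<in> J" using finJ jJ m_def Max_in by blast
  have mmax: "k \<le> m" if "k \<in> J" for k using finJ that m_def by simp
  have mi: "m < i" using big[OF mJ] mJ by (auto simp: J_def)
  have "z \<in> {vpt vs (Suc m)} \<union> (if m = 0 then {vpt vs 0} else {})"
    using edge_pw[OF P mi i] mJ zi by (auto simp: J_def)
  then show False
  proof
    assume z: "z \<in> {vpt vs (Suc m)}"
    show False
    proof (cases "Suc m = i")
      case True then show False using z nz by simp
    next
      case False
      then have "Suc m \<in> J" using z mi i by (auto simp: J_def edge_def)
      then show False using mmax by fastforce
    qed
  next
    assume z: "z \<in> (if m = 0 then {vpt vs 0} else {})"
    then have z0: "z = vpt vs 0" by (auto split: if_splits)
    have sn: "Suc (?n - 1) = ?n" using i by simp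
    have "z \<in> edge vs (?n - 1)" unfolding edge_def sn using z0 vpt_len[of vs] by simp
    then show False
    proof (cases "?n - 1 = i")
      case True then show False using z0 nz vpt_len[of vs] i by (metis Suc_diff_1 gr_zeroI less_nat_zero_code)
    next
      case False
      then have "?n - 1 \<in> J" using \<open>z \<in> edge vs (?n - 1)\<close> i by (auto simp: J_def)
      then show False using big i False by fastforce
    qed
  qed
qed

lemma box_Pair_real: "box (a::real, c::real) (b, d) = {a<..<b} \<times> {c<..<d}"
  by (auto simp: box_def Basis_prod_def inner_prod_def)

lemma cbox_Pair_real: "cbox (a::real, c::real) (b, d) = {a..b} \<times> {c..d}"
  by (simp add: cbox_Pair_eq)

lemma cbox_pair_nonempty: "a \<le> c \<Longrightarrow> b \<le> e \<Longrightarrow> cbox (a, b) (c, e) \<noteq> ({} :: pt set)"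
proof -
  assume "a \<le> c" "b \<le> e"
  then have "(a, b) \<in> cbox (a, b) (c, e)" by simp
  then show ?thesis by blast
qed

lemma cbox_pair_eq:
  assumes "a \<le> c" "b \<le> e" "cbox (a, b) (c, e) = (cbox (a', b') (c', e') :: pt set)"
  shows "a = a' \<and> b = b' \<and> c = c' \<and> e = e'"
  using assms cbox_pair_nonempty[of a c b e] eq_cbox[of "(a,b)" "(c,e)" "(a',b')" "(c',e')"] by auto

lemma ext_wide:
  assumes t: "t > 0" and k: "k \<ge> 1"
  shows "ext (cbox (a, b) (a + real k * t, b + t)) = (\<lambda>i. sq (a + real i * t) b t) ` {..<k}"
proof
  show "(\<lambda>i. sq (a + real i * t) b t) ` {..<k} \<subseteq> ext (cbox (a, b) (a + real k * t, b + t))"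
    unfolding ext_def using t k by blast
  show "ext (cbox (a, b) (a + real k * t, b + t)) \<subseteq> (\<lambda>i. sq (a + real i * t) b t) ` {..<k}"
  proof
    fix Q assume "Q \<in> ext (cbox (a, b) (a + real k * t, b + t))"
    then obtain a' b' t' k' i where tk: "t' > 0" "(k'::nat) \<ge> 1" "(i::nat) < k'" and
      cs: "(cbox (a, b) (a + real k * t, b + t) = cbox (a', b') (a' + real k' * t', b' + t') \<and> Q = sq (a' + real i * t') b' t')
    \<or> (cbox (a, b) (a + real k * t, b + t) = cbox (a', b') (a' + t', b' + real k' * t') \<and> Q = sq a' (b' + real i * t') t')"
      unfolding ext_def by blast
    have le: "a \<le> a + real k * t" "b \<le> b + t" using t k by auto
    from cs show "Q \<in> (\<lambda>i. sq (a + real i * t) b t) ` {..<k}"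
    proof
      assume h: "cbox (a, b) (a + real k * t, b + t) = cbox (a', b') (a' + real k' * t', b' + t') \<and> Q = sq (a' + real i * t') b' t'"
      then have e: "a = a'" "b = b'" "a + real k * t = a' + real k' * t'" "b + t = b' + t'"
        using cbox_pair_eq[OF le] by blast+
      then have "t = t'" by simp
      then have "real k = real k'" using e t by simp
      then have "k = k'" by simp
      then show ?thesis using h e \<open>t = t'\<close> tk by auto
    next
      assume h: "cbox (a, b) (a + real k * t, b + t) = cbox (a', b') (a' + t', b' + real k' * t') \<and> Q = sq a' (b' + real i * t') t'"
      then have e: "a = a'" "b = b'" "a + real k * t = a' + t'" "b + t = b' + real k' * t'"
        using cbox_pair_eq[OF le] by blast+
      then have tt: "t' = real k * t" "t = real k' * t'" by simp_all
      have tt3: "t = real k' * (real k * t)" using tt(2)[unfolded tt(1)] .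
      have "t * (real k' * real k - 1) = 0" using tt3 by algebra
      then have "real k' * real k = 1" using t by simp
      then have "real (k' * k) = real 1" by simp
      then have "k' * k = 1" by (simp only: of_nat_eq_iff)
      then have "k = 1" "k' = 1" by auto
      then show ?thesis using h e tk tt(1) by auto
    qed
  qed
qed

lemma ext_sq: "s > 0 \<Longrightarrow> ext (sq a b s) = {sq a b s}"
  using ext_wide[of s 1 a b] by (simp add: sq_def lessThan_Suc)

lemma ext_sub: "Q \<in> ext R \<Longrightarrow> Q \<subseteq> R \<and> (\<exists>a b t. t > 0 \<and> Q = sq a b t)"
proof -
  assume "Q \<in> ext R"
  then obtain a b t k i where tk: "t > 0" "(k::nat) \<ge> 1" "(i::nat) < k" and
      cs: "(R = cbox (a, b) (a + real k * t, b + t) \<and> Q = sq (a + real i * t) b t)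
    \<or> (R = cbox (a, b) (a + t, b + real k * t) \<and> Q = sq a (b + real i * t) t)"
    unfolding ext_def by blast
  have ik: "real i * t + t \<le> real k * t"
  proof -
    have "real (i + 1) \<le> real k" using tk by linarith
    then have "real (i+1) * t \<le> real k * t" using tk by (intro mult_right_mono) auto
    then show ?thesis by (simp add: algebra_simps)
  qed
  have it: "0 \<le> real i * t" using tk by simp
  from cs have "Q \<subseteq> R"
  proof
    assume h: "R = cbox (a, b) (a + real k * t, b + t) \<and> Q = sq (a + real i * t) b t"
    show ?thesis unfolding h[THEN conjunct1] h[THEN conjunct2] sq_def
      using ik it by (auto simp: cbox_Pair_real subset_iff)
  next
    assume h: "R = cbox (a, b) (a + t, b + real k * t) \<and> Q = sq a (b + real i * t) t"
    show ?thesis unfolding h[THEN conjunct1] h[THEN conjunct2] sq_def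
      using ik it by (auto simp: cbox_Pair_real subset_iff)
  qed
  moreover have "\<exists>a b t. t > 0 \<and> Q = sq a b t" using cs tk by blast
  ultimately show ?thesis by blast
qed

lemma recpack_sq: "valid_square P Q \<Longrightarrow> recpack P Q"
proof -
  assume "valid_square P Q"
  then obtain a b s where "s > 0" "Q = sq a b s" "Q \<subseteq> P" unfolding valid_square_def by blast
  then show ?thesis unfolding recpack_def sq_def
    by (intro conjI exI[of _ a] exI[of _ b] exI[of _ s] exI[of _ "1::nat"]) auto
qed

lemma idx_exists:
  assumes "0 \<le> r" "r \<le> real k" "k \<ge> 1"
  shows "\<exists>i<k. real i \<le> r \<and> r \<le> real i + 1"
proof (cases "r \<ge> real k - 1")
  case True
  then show ?thesis using assms by (intro exI[of _ "k - 1"]) auto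
next
  case False
  define i where "i = nat \<lfloor>r\<rfloor>"
  have "real i = of_int \<lfloor>r\<rfloor>" using assms(1) by (simp add: i_def)
  then have "real i \<le> r" "r \<le> real i + 1" by linarith+
  moreover have "i < k" using False \<open>real i \<le> r\<close> by linarith
  ultimately show ?thesis by blast
qed

lemma closure_meets_box:
  assumes s: "s > 0" and z: "z \<in> sq a b s" and HO: "open W" "z \<in> W"
  shows "interior (sq a b s) \<inter> W \<noteq> {}"
proof -
  have ne: "box (a, b) (a + s, b + s) \<noteq> {}"
  proof -
    have "(a + s/2, b + s/2) \<in> box (a, b) (a + s, b + s)" using s by (simp add: box_Pair_real)
    then show ?thesis by blast
  qed
  have cl: "closure (interior (sq a b s)) = sq a b s"
    unfolding sq_def using ne by (simp add: closure_box interior_cbox)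
  obtain e where e: "e > 0" "ball z e \<subseteq> W" using HO open_contains_ball by blast
  have "z \<in> closure (interior (sq a b s))" using cl z by simp
  then obtain w where "w \<in> interior (sq a b s)" "dist w z < e" using e(1) closure_approachable by blast
  then have "w \<in> interior (sq a b s) \<inter> W" using e(2) by (auto simp: dist_commute)
  then show ?thesis by blast
qed

lemma edge_horiz:
  assumes "horiz_edge vs i"
  shows "edge vs i = closed_segment (fst (vpt vs i)) (fst (vpt vs (Suc i))) \<times> {snd (vpt vs i)}"
proof -
  obtain p1 h1 p2 h2 where e: "vpt vs i = (p1, h1)" "vpt vs (Suc i) = (p2, h2)" by (meson prod.exhaust)
  then show ?thesis using assms unfolding edge_def horiz_edge_def by (simp add: seg_horiz)
qed

lemma edge_vert:
  assumes "vert_edge vs i"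
  shows "edge vs i = {fst (vpt vs i)} \<times> closed_segment (snd (vpt vs i)) (snd (vpt vs (Suc i)))"
proof -
  obtain p1 h1 p2 h2 where e: "vpt vs i = (p1, h1)" "vpt vs (Suc i) = (p2, h2)" by (meson prod.exhaust)
  then show ?thesis using assms unfolding edge_def vert_edge_def by (simp add: seg_vert)
qed

lemma seg_between:
  fixes L M :: real
  assumes "p \<in> closed_segment L M" "q \<in> closed_segment L M" "min p q \<le> t" "t \<le> max p q"
  shows "t \<in> closed_segment L M"
  using assms by (auto simp: closed_segment_eq_real_ivl split: if_splits)

lemma seg_ends:
  fixes L M :: real
  assumes "p \<in> closed_segment L M" "q \<in> closed_segment L M" "p < t" "t < q"
  shows "t \<noteq> L \<and> t \<noteq> M"
  using assms by (auto simp: closed_segment_eq_real_ivl split: if_splits)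

lemma lft_sq:
  assumes "s > 0"
  shows "Inf (fst ` sq a b s) = a"
proof -
  have "fst ` sq a b s = {a..a+s}"
    unfolding sq_def cbox_Pair_real using assms by force
  then show ?thesis using assms by simp
qed

theorem lemma4p13:
  fixes vs :: "(int \<times> int) list" and \<eta> :: nat and x y d :: real
    and i1 i2 :: nat and Y :: "(real \<times> real) set" and \<R> :: "(real \<times> real) set set"
  assumes P: "ortho_polygon vs"
    and eta: "\<eta> \<ge> 1"
    and S_max: "maximal_square (region vs) (sq x y d)"
    and e1: "i1 < length vs" "horiz_edge vs i1"
       "seg_overlap (closed_segment (x, y + d) (x + d, y + d)) (edge vs i1)"
       "(x + d, y + d) \<in> edge vs i1"
    and e2: "i2 < length vs" "horiz_edge vs i2"
       "seg_overlap (closed_segment (x, y) (x + d, y)) (edge vs i2)"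
       "(x + d, y) \<in> edge vs i2"
    and Y: "strip vs Y"
       "\<exists>a b c e. Y = cbox (a, b) (c, e) \<and>
          closed_segment (a, e) (c, e) \<subseteq> edge vs i1 \<and>
          closed_segment (a, b) (c, b) \<subseteq> edge vs i2 \<and>
          c - (x + d) > real \<eta> * d"
    and part: "partial_solution (region vs) \<R>"
    and S_in: "sq x y d \<in> \<R>"
    and no_ov: "\<forall>R'\<in>\<R>. \<not> overlaps (cbox (x + d, y) (x + d + real \<eta> * d, y + d)) R'"
  shows "partial_solution (region vs) (insert (cbox (x + d, y) (x + d + real \<eta> * d, y + d)) \<R>)"
proof -
  define n where "n = length vs"
  define C where "C = path_image (boundary_path vs)"
  define reg where "reg = region vs"
  define R where "R = cbox (x + d, y) (x + d + real \<eta> * d, y + d)"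
  have n4: "n \<ge> 4" using P by (simp add: ortho_polygon_def n_def)
  have sp: "simple_path (boundary_path vs)" using P by (simp add: ortho_polygon_def)
  have loop: "pathfinish (boundary_path vs) = pathstart (boundary_path vs)"
    using bp_props[of vs] n4 by (simp add: n_def)
  have Cedges: "C = (\<Union>k<n. edge vs k)" using bp_props[of vs] n4 by (simp add: n_def C_def)
  have regC: "reg = C \<union> inside C" by (simp add: reg_def region_def C_def)
  have noint: "p \<notin> interior reg" if "p \<in> C" for p
    using curve_not_interior[OF sp loop] that regC C_def by simp
  have edgeC: "z \<in> C" if "k < n" "z \<in> edge vs k" for k z using that Cedges by blast
  have closedC: "closed C" unfolding C_def by (rule closed_path_image[OF simple_path_imp_path[OF sp]])
  have ortho: "horiz_edge vs j \<or> vert_edge vs j" if "j < n" for j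
    using P that by (auto simp: ortho_polygon_def n_def)
  have hv: "\<not> vert_edge vs j" if "horiz_edge vs j" for j
    using that by (simp add: horiz_edge_def vert_edge_def)

  from S_max obtain x0 y0 s0 where s0: "s0 > 0" "sq x y d = sq x0 y0 s0" and S_reg: "sq x y d \<subseteq> reg"
    unfolding maximal_square_def valid_square_def reg_def by blast
  have "x0 = x \<and> y0 = y \<and> x0 + s0 = x + d \<and> y0 + s0 = y + d"
    using cbox_pair_eq[of x0 "x0 + s0" y0 "y0 + s0" x y "x + d" "y + d"] s0 by (simp add: sq_def)
  then have d: "d > 0" using s0 by simp
  have S_reg': "cbox (x, y) (x + d, y + d) \<subseteq> reg" using S_reg by (simp add: sq_def)

  define A1 where "A1 = fst (vpt vs i1)"
  define B1 where "B1 = fst (vpt vs (Suc i1))"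
  have E1: "edge vs i1 = closed_segment A1 B1 \<times> {snd (vpt vs i1)}"
    using edge_horiz[OF e1(2)] by (simp add: A1_def B1_def)
  have h1: "snd (vpt vs i1) = y + d" using e1(4) E1 by auto
  have E1': "edge vs i1 = closed_segment A1 B1 \<times> {y + d}" using E1 h1 by simp
  obtain p q where pq: "p \<noteq> q" "p \<in> closed_segment (x, y + d) (x + d, y + d) \<inter> edge vs i1"
    "q \<in> closed_segment (x, y + d) (x + d, y + d) \<inter> edge vs i1"
    using e1(3) unfolding seg_overlap_def by blast
  obtain x1 where x1: "x \<le> x1" "x1 < x + d" "x1 \<in> closed_segment A1 B1"
  proof -
    have segS: "closed_segment (x, y + d) (x + d, y + d) = {x..x+d} \<times> {y + d}"
      using d by (simp add: seg_horiz closed_segment_eq_real_ivl)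
    have pS: "p \<in> {x..x+d} \<times> {y + d}" "q \<in> {x..x+d} \<times> {y + d}"
      using pq(2,3) unfolding segS by blast+
    have "fst p \<noteq> x + d \<or> fst q \<noteq> x + d"
    proof (rule ccontr)
      assume "\<not> (fst p \<noteq> x + d \<or> fst q \<noteq> x + d)"
      then have "fst p = fst q" "snd p = snd q" using pS by auto
      then show False using pq(1) by (simp add: prod_eq_iff)
    qed
    then obtain w where w0: "w \<in> {p, q}" "fst w \<noteq> x + d" by blast
    have "w \<in> closed_segment (x, y + d) (x + d, y + d) \<inter> edge vs i1" using w0 pq by blast
    then have w12: "w \<in> ({x..x+d} \<times> {y + d}) \<inter> (closed_segment A1 B1 \<times> {y + d})"
      unfolding segS E1' .
    have "x \<le> fst w" "fst w \<le> x + d" "fst w \<in> closed_segment A1 B1" using w12 by (auto simp: mem_Times_iff)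
    then show ?thesis using that w0(2) by simp
  qed
  define A2 where "A2 = fst (vpt vs i2)"
  define B2 where "B2 = fst (vpt vs (Suc i2))"
  have E2: "edge vs i2 = closed_segment A2 B2 \<times> {snd (vpt vs i2)}"
    using edge_horiz[OF e2(2)] by (simp add: A2_def B2_def)
  have h2: "snd (vpt vs i2) = y" using e2(4) E2 by auto
  have E2': "edge vs i2 = closed_segment A2 B2 \<times> {y}" using E2 h2 by simp
  obtain p' q' where pq': "p' \<noteq> q'" "p' \<in> closed_segment (x, y) (x + d, y) \<inter> edge vs i2"
    "q' \<in> closed_segment (x, y) (x + d, y) \<inter> edge vs i2"
    using e2(3) unfolding seg_overlap_def by blast
  obtain x2 where x2: "x \<le> x2" "x2 < x + d" "x2 \<in> closed_segment A2 B2"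
  proof -
    have segS: "closed_segment (x, y) (x + d, y) = {x..x+d} \<times> {y}"
      using d by (simp add: seg_horiz closed_segment_eq_real_ivl)
    have pS: "p' \<in> {x..x+d} \<times> {y}" "q' \<in> {x..x+d} \<times> {y}"
      using pq'(2,3) unfolding segS by blast+
    have "fst p' \<noteq> x + d \<or> fst q' \<noteq> x + d"
    proof (rule ccontr)
      assume "\<not> (fst p' \<noteq> x + d \<or> fst q' \<noteq> x + d)"
      then have "fst p' = fst q'" "snd p' = snd q'" using pS by auto
      then show False using pq'(1) by (simp add: prod_eq_iff)
    qed
    then obtain w where w0: "w \<in> {p', q'}" "fst w \<noteq> x + d" by blast
    have "w \<in> closed_segment (x, y) (x + d, y) \<inter> edge vs i2" using w0 pq' by blast
    then have w12: "w \<in> ({x..x+d} \<times> {y}) \<inter> (closed_segment A2 B2 \<times> {y})"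
      unfolding segS E2' .
    have "x \<le> fst w" "fst w \<le> x + d" "fst w \<in> closed_segment A2 B2" using w12 by (auto simp: mem_Times_iff)
    then show ?thesis using that w0(2) by simp
  qed

  obtain a b c e where Yeq: "Y = cbox (a, b) (c, e)" and Ytop: "closed_segment (a, e) (c, e) \<subseteq> edge vs i1"
    and Ybot: "closed_segment (a, b) (c, b) \<subseteq> edge vs i2" and ceta: "c - (x + d) > real \<eta> * d"
    using Y(2) by blast
  have "(c, e) \<in> edge vs i1" using Ytop ends_in_segment(2) by blast
  then have "(c, e) \<in> closed_segment A1 B1 \<times> {y + d}" unfolding E1' .
  then have ee: "e = y + d" and cA1: "c \<in> closed_segment A1 B1" by auto
  have "(c, b) \<in> edge vs i2" using Ybot ends_in_segment(2) by blast
  then have "(c, b) \<in> closed_segment A2 B2 \<times> {y}" unfolding E2' .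
  then have bb: "b = y" and cA2: "c \<in> closed_segment A2 B2" by auto
  have Ycand: "strip_candidate vs Y" using Y(1) unfolding strip_def by (rule conjunct1)
  then have "Y \<subseteq> region vs" unfolding strip_candidate_def by (rule conjunct1)
  then have Y_reg: "Y \<subseteq> reg" by (simp add: reg_def)
  obtain a' b' c' e' where abce: "a' < c'" "b' < e'" "Y = cbox (a', b') (c', e')"
    using Ycand unfolding strip_candidate_def by blast
  have "cbox (a', b') (c', e') = cbox (a, b) (c, e)" using abce(3) Yeq by simp
  then have "a' = a \<and> b' = b \<and> c' = c \<and> e' = e"
    using cbox_pair_eq[of a' c' b' e' a b c e] abce(1,2) by linarith
  then have ac: "a < c" using abce(1) by simp
  have etad: "real \<eta> * d > 0" using eta d by simp

  have e1line: "(t, y + d) \<in> edge vs i1" if "x1 \<le> t" "t \<le> c" for t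
    using seg_between[OF x1(3) cA1, of t] that E1' by simp
  have e2line: "(t, y) \<in> edge vs i2" if "x2 \<le> t" "t \<le> c" for t
    using seg_between[OF x2(3) cA2, of t] that E2' by simp
  have e1inner: "(t, y + d) \<notin> edge vs j" if "x1 < t" "t < c" "j < n" "j \<noteq> i1" for t j
  proof
    assume "(t, y + d) \<in> edge vs j"
    then have "(t, y + d) = vpt vs i1 \<or> (t, y + d) = vpt vs (Suc i1)"
      using edge_unique[OF P e1(1), of j] that e1line[of t] by (auto simp: n_def)
    then have "fst (t, y + d) = fst (vpt vs i1) \<or> fst (t, y + d) = fst (vpt vs (Suc i1))" by metis
    then have "t = A1 \<or> t = B1" by (simp add: A1_def B1_def)
    then show False using seg_ends[OF x1(3) cA1, of t] that by auto
  qed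
  have e2inner: "(t, y) \<notin> edge vs j" if "x2 < t" "t < c" "j < n" "j \<noteq> i2" for t j
  proof
    assume "(t, y) \<in> edge vs j"
    then have "(t, y) = vpt vs i2 \<or> (t, y) = vpt vs (Suc i2)"
      using edge_unique[OF P e2(1), of j] that e2line[of t] by (auto simp: n_def)
    then have "fst (t, y) = fst (vpt vs i2) \<or> fst (t, y) = fst (vpt vs (Suc i2))" by metis
    then have "t = A2 \<or> t = B2" by (simp add: A2_def B2_def)
    then show False using seg_ends[OF x2(3) cA2, of t] that by auto
  qed

  have intS: "z \<notin> C" if "z \<in> box (x, y) (x + d, y + d)" for z
  proof
    assume "z \<in> C"
    moreover have "box (x, y) (x + d, y + d) \<subseteq> interior reg"
      using interior_mono[OF S_reg'] by simp
    ultimately show False using noint that by blast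
  qed
  have intY: "z \<notin> C" if "z \<in> box (a, y) (c, y + d)" for z
  proof
    assume "z \<in> C"
    moreover have "box (a, y) (c, y + d) \<subseteq> interior reg"
      using interior_mono[OF Y_reg] Yeq bb ee by simp
    ultimately show False using noint that by blast
  qed
  define Ob where "Ob = box (x, y) (c, y + d)"
  define K where "K = {z::pt. x + d \<le> fst z \<and> fst z \<le> a \<and> y < snd z \<and> snd z < y + d}"
  have KOb: "K \<subseteq> Ob"
  proof
    fix z assume "z \<in> K"
    then show "z \<in> Ob" unfolding K_def Ob_def using d ac by (cases z) (auto simp: box_Pair_real)
  qed
  have x1c: "x1 < c" "x2 < c" using x1 x2 ceta etad by linarith+
  have lemA: "edge vs j \<subseteq> K" if j: "j < n" and z0: "z0 \<in> edge vs j" "z0 \<in> Ob" for j z0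
  proof (cases "horiz_edge vs j")
    case True
    define L where "L = fst (vpt vs j)"
    define M where "M = fst (vpt vs (Suc j))"
    define h where "h = snd (vpt vs j)"
    have Ej: "edge vs j = closed_segment L M \<times> {h}" using edge_horiz[OF True] by (simp add: L_def M_def h_def)
    obtain p0 where p0: "z0 = (p0, h)" "p0 \<in> closed_segment L M" using z0(1) Ej by auto
    have p0b: "x < p0" "p0 < c" "y < h" "h < y + d" using z0(2) p0(1) by (auto simp: Ob_def box_Pair_real)
    show ?thesis
    proof
      fix w assume w: "w \<in> edge vs j"
      then obtain p where p: "w = (p, h)" "p \<in> closed_segment L M" using Ej by auto
      have "x + d \<le> p"
      proof (rule ccontr)
        assume "\<not> x + d \<le> p"
        define t where "t = (if x < p then p else (x + min p0 (x + d)) / 2)"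
        have t1: "x < t" "t < x + d" using \<open>\<not> x + d \<le> p\<close> p0b d by (auto simp: t_def)
        have t2: "min p p0 \<le> t" "t \<le> max p p0" using \<open>\<not> x + d \<le> p\<close> p0b d by (auto simp: t_def)
        have "(t, h) \<in> edge vs j" using seg_between[OF p(2) p0(2) t2] Ej by simp
        then have "(t, h) \<in> C" using edgeC j by blast
        moreover have "(t, h) \<in> box (x, y) (x + d, y + d)" using t1 p0b by (simp add: box_Pair_real)
        ultimately show False using intS by blast
      qed
      moreover have "p \<le> a"
      proof (rule ccontr)
        assume "\<not> p \<le> a"
        define t where "t = (if p < c then p else (max p0 a + c) / 2)"
        have t1: "a < t" "t < c" using \<open>\<not> p \<le> a\<close> p0b ac by (auto simp: t_def)
        have t2: "min p p0 \<le> t" "t \<le> max p p0" using \<open>\<not> p \<le> a\<close> p0b ac by (auto simp: t_def)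
        have "(t, h) \<in> edge vs j" using seg_between[OF p(2) p0(2) t2] Ej by simp
        then have "(t, h) \<in> C" using edgeC j by blast
        moreover have "(t, h) \<in> box (a, y) (c, y + d)" using t1 p0b by (simp add: box_Pair_real)
        ultimately show False using intY by blast
      qed
      ultimately show "w \<in> K" using p p0b by (simp add: K_def)
    qed
  next
    case False
    then have V: "vert_edge vs j" using ortho j by blast
    define L where "L = snd (vpt vs j)"
    define M where "M = snd (vpt vs (Suc j))"
    define p where "p = fst (vpt vs j)"
    have Ej: "edge vs j = {p} \<times> closed_segment L M" using edge_vert[OF V] by (simp add: L_def M_def p_def)
    obtain h0 where h0: "z0 = (p, h0)" "h0 \<in> closed_segment L M" using z0(1) Ej by auto
    have p0b: "x < p" "p < c" "y < h0" "h0 < y + d" using z0(2) h0(1) by (auto simp: Ob_def box_Pair_real)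
    have pS: "\<not> (x < p \<and> p < x + d)"
    proof
      assume "x < p \<and> p < x + d"
      then have "z0 \<in> box (x, y) (x + d, y + d)" using h0 p0b by (simp add: box_Pair_real)
      then show False using intS edgeC[OF j z0(1)] by blast
    qed
    have pY: "\<not> (a < p \<and> p < c)"
    proof
      assume "a < p \<and> p < c"
      then have "z0 \<in> box (a, y) (c, y + d)" using h0 p0b by (simp add: box_Pair_real)
      then show False using intY edgeC[OF j z0(1)] by blast
    qed
    have pr: "x + d \<le> p" "p \<le> a" using pS pY p0b by linarith+
    have ji1: "j \<noteq> i1" using V hv[OF e1(2)] by auto
    have ji2: "j \<noteq> i2" using V hv[OF e2(2)] by auto
    show ?thesis
    proof
      fix w assume w: "w \<in> edge vs j"
      then obtain hw where hw: "w = (p, hw)" "hw \<in> closed_segment L M" using Ej by auto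
      have "hw < y + d"
      proof (rule ccontr)
        assume "\<not> hw < y + d"
        then have "min hw h0 \<le> y + d" "y + d \<le> max hw h0" using p0b by auto
        then have "(p, y + d) \<in> edge vs j" using seg_between[OF hw(2) h0(2)] Ej by simp
        moreover have "x1 < p" "p < c" using pr x1 ac by linarith+
        ultimately show False using e1inner[of p j] j ji1 by blast
      qed
      moreover have "y < hw"
      proof (rule ccontr)
        assume "\<not> y < hw"
        then have "min hw h0 \<le> y" "y \<le> max hw h0" using p0b by auto
        then have "(p, y) \<in> edge vs j" using seg_between[OF hw(2) h0(2)] Ej by simp
        moreover have "x2 < p" "p < c" using pr x2 ac by linarith+
        ultimately show False using e2inner[of p j] j ji2 by blast
      qed
      ultimately show "w \<in> K" using hw pr by (simp add: K_def)
    qed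
  qed

  have n0: "0 < n" using n4 by simp
  have ObC: "edge vs j0 \<inter> Ob = {}" if j0: "j0 < n" for j0
  proof (rule ccontr)
    assume "edge vs j0 \<inter> Ob \<noteq> {}"
    then obtain z0 where z0: "z0 \<in> edge vs j0" "z0 \<in> Ob" by blast
    have allK: "edge vs ((j0 + k) mod n) \<subseteq> K" for k
    proof (induction k)
      case 0
      then show ?case using lemA[OF j0 z0] j0 by simp
    next
      case (Suc k)
      define j where "j = (j0 + k) mod n"
      have jn: "j < n" using n0 by (simp add: j_def)
      have "vpt vs (Suc j) \<in> edge vs j" by (simp add: edge_def)
      then have v: "vpt vs (Suc j) \<in> Ob" using Suc KOb by (auto simp: j_def)
      have "vpt vs (Suc j) \<in> edge vs (Suc j)" by (simp add: edge_def)
      moreover have "edge vs (Suc j) = edge vs (Suc j mod n)" using edge_mod[of vs "Suc j"] by (simp add: n_def)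
      moreover have "Suc j mod n = (j0 + Suc k) mod n" by (simp add: j_def mod_Suc_eq)
      ultimately have "vpt vs (Suc j) \<in> edge vs ((j0 + Suc k) mod n)" by simp
      moreover have "(j0 + Suc k) mod n < n" using n0 by simp
      ultimately show ?case using lemA v by blast
    qed
    have "(j0 + (n - j0 + i1)) mod n = i1" using j0 e1(1) by (simp add: n_def)
    then have "edge vs i1 \<subseteq> K" using allK[of "n - j0 + i1"] by simp
    then show False using e1(4) by (auto simp: K_def)
  qed
  have CObE: "C \<inter> Ob = {}" using ObC Cedges by blast
  have Ob_conn: "connected Ob" unfolding Ob_def by (simp add: convex_connected)
  have zc: "(x + d / 2, y + d / 2) \<in> Ob" "(x + d / 2, y + d / 2) \<in> box (x, y) (x + d, y + d)"
    using d ceta etad by (auto simp: Ob_def box_Pair_real)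
  have zcin: "(x + d / 2, y + d / 2) \<in> inside C"
  proof -
    have "box (x, y) (x + d, y + d) \<subseteq> interior reg"
      using interior_mono[OF S_reg'] by simp
    then have "(x + d / 2, y + d / 2) \<in> reg" using zc(2) interior_subset by blast
    then show ?thesis using regC intS[OF zc(2)] by blast
  qed
  have Ob_in: "Ob \<subseteq> inside C"
  proof -
    have "Ob \<subseteq> inside C \<union> outside C" using CObE inside_Un_outside[of C] by blast
    moreover have "inside C \<inter> outside C \<inter> Ob = {}" using inside_Int_outside[of C] by blast
    ultimately have "inside C \<inter> Ob = {} \<or> outside C \<inter> Ob = {}"
      using connectedD[OF Ob_conn open_inside[OF closedC] open_outside[OF closedC]] by blast
    then have "outside C \<inter> Ob = {}" using zcin zc(1) by blast
    then show ?thesis using \<open>Ob \<subseteq> inside C \<union> outside C\<close> by blast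
  qed
  have Big: "cbox (x, y) (c, y + d) \<subseteq> reg"
  proof -
    have "Ob \<noteq> {}" using zc by blast
    then have "closure Ob = cbox (x, y) (c, y + d)" unfolding Ob_def by (simp add: closure_box)
    moreover have "closure Ob \<subseteq> closure (inside C)" using Ob_in by (rule closure_mono)
    moreover have "closure (inside C) \<subseteq> C \<union> inside C" by (rule closure_inside_subset[OF closedC])
    ultimately show ?thesis using regC by blast
  qed
  have R_reg: "R \<subseteq> reg"
  proof -
    have "R \<subseteq> cbox (x, y) (c, y + d)" unfolding R_def using d ceta etad by (auto simp: cbox_Pair_real)
    then show ?thesis using Big by blast
  qed

  have conf: "y \<le> b' \<and> b' + s \<le> y + d \<and> x < a'"
    if s: "s > 0" and Qr: "sq a' b' s \<subseteq> reg" and z: "z \<in> sq a' b' s" "z \<in> box (x + d, y) (x + d + real \<eta> * d, y + d)"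
    for a' b' s z
  proof -
    obtain p h where ph: "z = (p, h)" by (cases z)
    have zz: "a' \<le> p" "p \<le> a' + s" "b' \<le> h" "h \<le> b' + s" "x + d < p" "p < x + d + real \<eta> * d" "y < h" "h < y + d"
      using z ph by (auto simp: sq_def cbox_Pair_real box_Pair_real)
    define M where "M = max a' (x + d)"
    define N where "N = min (a' + s) (x + d + real \<eta> * d)"
    define pm where "pm = (M + N) / 2"
    have m1: "M < N"
    proof -
      have "a' < a' + s" "a' < x + d + real \<eta> * d" "x + d < a' + s" "x + d < x + d + real \<eta> * d"
        using zz s etad by linarith+
      then show ?thesis by (simp add: M_def N_def)
    qed
    have m2: "a' \<le> M" "x + d \<le> M" "N \<le> a' + s" "N \<le> x + d + real \<eta> * d" by (auto simp: M_def N_def)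
    have pmb1: "a' < pm" using m1 m2 unfolding pm_def by (simp add: field_simps)
    have pmb2: "pm < a' + s" using m1 m2 unfolding pm_def by (simp add: field_simps)
    have pmb3: "x + d < pm" using m1 m2 unfolding pm_def by (simp add: field_simps)
    have pmb4: "pm < x + d + real \<eta> * d" using m1 m2 unfolding pm_def by (simp add: field_simps)
    note pmb = pmb1 pmb2 pmb3 pmb4
    have intQ: "interior (sq a' b' s) \<subseteq> interior reg" using interior_mono[OF Qr] .
    have top: "b' + s \<le> y + d"
    proof (rule ccontr)
      assume "\<not> b' + s \<le> y + d"
      then have "(pm, y + d) \<in> interior (sq a' b' s)" using pmb zz by (simp add: sq_def box_Pair_real)
      then have "(pm, y + d) \<in> interior reg" using intQ by blast
      moreover have "(pm, y + d) \<in> C" using e1line[of pm] pmb x1 ceta edgeC[OF e1(1)[folded n_def]] by simp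
      ultimately show False using noint by blast
    qed
    have bot: "y \<le> b'"
    proof (rule ccontr)
      assume "\<not> y \<le> b'"
      then have "(pm, y) \<in> interior (sq a' b' s)" using pmb zz by (simp add: sq_def box_Pair_real)
      then have "(pm, y) \<in> interior reg" using intQ by blast
      moreover have "(pm, y) \<in> C" using e2line[of pm] pmb x2 ceta edgeC[OF e2(1)[folded n_def]] by simp
      ultimately show False using noint by blast
    qed
    have "x < a'" using top bot zz by linarith
    then show ?thesis using top bot by simp
  qed

  obtain Rs' where mc: "min_covering reg Rs'" and subR: "\<R> \<subseteq> Rs'"
    using part unfolding partial_solution_def reg_def by blast
  define U where "U = (\<Union>R'\<in>Rs'. ext R')"
  have msc: "min_square_cover reg U" using mc unfolding min_covering_def U_def by blast
  have finU: "finite U" and validU: "\<And>Q. Q \<in> U \<Longrightarrow> valid_square reg Q" and unU: "\<Union>U = reg"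
    and minU: "\<And>V. finite V \<Longrightarrow> (\<forall>Q\<in>V. valid_square reg Q) \<Longrightarrow> \<Union>V = reg \<Longrightarrow> card U \<le> card V"
    using msc unfolding min_square_cover_def by blast+
  have rpRs: "\<And>R'. R' \<in> Rs' \<Longrightarrow> recpack reg R'" and disjRs: "\<And>A B. A \<in> Rs' \<Longrightarrow> B \<in> Rs' \<Longrightarrow> A \<noteq> B \<Longrightarrow> ext A \<inter> ext B = {}"
    using mc unfolding min_covering_def by blast+
  have sqU: "\<exists>a' b' s. s > 0 \<and> Q = sq a' b' s" if "Q \<in> U" for Q
    using validU[OF that] unfolding valid_square_def by blast
  have QregU: "Q \<subseteq> reg" if "Q \<in> U" for Q
    using validU[OF that] unfolding valid_square_def by blast
  have extU: "ext Q = {Q}" if "Q \<in> U" for Q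
    using sqU[OF that] ext_sq by blast
  define Bx where "Bx = cbox (x, y) (x + d + real \<eta> * d, y + d)"
  define D where "D = {Q \<in> U. Q \<subseteq> Bx \<and> overlaps R Q}"
  have DU: "D \<subseteq> U" by (auto simp: D_def)
  have intR: "interior R = box (x + d, y) (x + d + real \<eta> * d, y + d)" by (simp add: R_def)

  define lft where "lft Q = Inf (fst ` Q)" for Q :: "pt set"
  define L where "L = lft ` {Q \<in> U. Q \<inter> interior R \<noteq> {} \<and> \<not> Q \<subseteq> Bx}"
  have finL: "finite L" using finU by (simp add: L_def)
  define m where "m = Min (insert (x + d + real \<eta> * d) L)"
  have mle: "m \<le> x + d + real \<eta> * d" using finL by (simp add: m_def)
  have Lm: "m \<le> l" if "l \<in> L" for l using finL that by (simp add: m_def)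
  have Lgt: "x + real \<eta> * d < l" if lL: "l \<in> L" for l
  proof -
    obtain Q where Q: "Q \<in> U" "Q \<inter> interior R \<noteq> {}" "\<not> Q \<subseteq> Bx" "l = lft Q" using lL by (auto simp: L_def)
    obtain a' b' s where Qs: "s > 0" "Q = sq a' b' s" using sqU[OF Q(1)] by blast
    obtain z where z: "z \<in> Q" "z \<in> interior R" using Q(2) by blast
    have cf: "y \<le> b' \<and> b' + s \<le> y + d \<and> x < a'" using conf[OF Qs(1), of a' b' z] QregU[OF Q(1)] Qs z intR by simp
    have "\<not> a' + s \<le> x + d + real \<eta> * d"
    proof
      assume "a' + s \<le> x + d + real \<eta> * d"
      then have "Q \<subseteq> Bx" using cf Qs by (auto simp: Bx_def sq_def cbox_Pair_real)
      then show False using Q(3) by simp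
    qed
    moreover have "s \<le> d" using cf by linarith
    moreover have "l = a'" using Q(4) Qs lft_sq by (simp add: lft_def)
    ultimately show ?thesis by linarith
  qed
  have mgt: "x + real \<eta> * d < m"
  proof -
    have "\<forall>l\<in>insert (x + d + real \<eta> * d) L. x + real \<eta> * d < l" using Lgt d by auto
    then show ?thesis using finL Min_in[of "insert (x + d + real \<eta> * d) L"] by (simp add: m_def)
  qed

  have etapos: "real \<eta> > 0" using eta by simp
  define \<epsilon> where "\<epsilon> = (m - (x + real \<eta> * d)) / (2 * real \<eta>)"
  have epos: "\<epsilon> > 0" using mgt etapos by (simp add: \<epsilon>_def)
  have eta_eps: "2 * (real \<eta> * \<epsilon>) = m - (x + real \<eta> * d)" using etapos by (simp add: \<epsilon>_def field_simps)
  define tk where "tk k = x + d + \<epsilon> + real k * (d + \<epsilon>)" for k :: nat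
  have tk_lo: "x + d < tk k" for k
  proof -
    have "0 \<le> real k * (d + \<epsilon>)" using d epos by simp
    then show ?thesis using epos by (simp add: tk_def)
  qed
  have tk_hi: "tk k < m" if k: "k < \<eta>" for k
  proof -
    have "real k \<le> real \<eta> - 1" using k by linarith
    then have "real k * (d + \<epsilon>) \<le> (real \<eta> - 1) * (d + \<epsilon>)" using d epos by (intro mult_right_mono) auto
    moreover have "(real \<eta> - 1) * (d + \<epsilon>) = real \<eta> * d + real \<eta> * \<epsilon> - d - \<epsilon>" by (simp add: algebra_simps)
    ultimately have "tk k \<le> x + real \<eta> * d + real \<eta> * \<epsilon>" by (simp add: tk_def)
    then show ?thesis using eta_eps mgt by linarith
  qed
  define ptk where "ptk k = (tk k, y + d / 2)" for k
  have ptk_int: "ptk k \<in> interior R" if "k < \<eta>" for k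
    using tk_lo[of k] tk_hi[OF that] mle d by (simp add: intR ptk_def box_Pair_real)
  have ptk_U: "\<exists>Q. Q \<in> U \<and> ptk k \<in> Q" if "k < \<eta>" for k
  proof -
    have "ptk k \<in> reg" using ptk_int[OF that] interior_subset R_reg by blast
    then show ?thesis using unU by blast
  qed
  define Qf where "Qf k = (SOME Q. Q \<in> U \<and> ptk k \<in> Q)" for k
  have Qf: "Qf k \<in> U" "ptk k \<in> Qf k" if "k < \<eta>" for k
    using someI_ex[OF ptk_U[OF that]] by (simp_all add: Qf_def)
  have Qf_sq: "\<exists>a' b' s. s > 0 \<and> Qf k = sq a' b' s \<and> a' \<le> tk k \<and> tk k \<le> a' + s \<and> s \<le> d \<and> Qf k \<in> D"
    if k: "k < \<eta>" for k
  proof -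
    obtain a' b' s where Qs: "s > 0" "Qf k = sq a' b' s" using sqU[OF Qf(1)[OF k]] by blast
    have cf: "y \<le> b' \<and> b' + s \<le> y + d \<and> x < a'"
      using conf[OF Qs(1), of a' b' "ptk k"] QregU[OF Qf(1)[OF k]] Qs Qf(2)[OF k] ptk_int[OF k] intR by simp
    have ins: "a' \<le> tk k" "tk k \<le> a' + s" using Qf(2)[OF k] Qs by (auto simp: ptk_def sq_def cbox_Pair_real)
    have inB: "Qf k \<subseteq> Bx"
    proof (rule ccontr)
      assume nb: "\<not> Qf k \<subseteq> Bx"
      have "Qf k \<inter> interior R \<noteq> {}" using Qf(2)[OF k] ptk_int[OF k] by blast
      then have "lft (Qf k) \<in> L" using nb Qf(1)[OF k] by (auto simp: L_def)
      moreover have "lft (Qf k) = a'" using Qs lft_sq by (simp add: lft_def)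
      ultimately have "m \<le> a'" using Lm by blast
      then show False using ins tk_hi[OF k] by linarith
    qed
    have "interior (sq a' b' s) \<inter> interior R \<noteq> {}"
      using closure_meets_box[where z="ptk k" and W="interior R" and a=a' and b=b', OF Qs(1)] Qf(2)[OF k] Qs ptk_int[OF k] by simp
    then have "overlaps R (Qf k)" using Qs by (auto simp: overlaps_def)
    then have "Qf k \<in> D" using inB Qf(1)[OF k] by (simp add: D_def)
    moreover have "s \<le> d" using cf by linarith
    ultimately show ?thesis using Qs ins by blast
  qed
  have injQ: "inj_on Qf {..<\<eta>}"
  proof (rule inj_onI)
    have aux: False if kl: "k < l" "l < \<eta>" "Qf k = Qf l" for k l
    proof -
      obtain a' b' s where A: "s > 0" "Qf k = sq a' b' s" "a' \<le> tk k" "s \<le> d" using Qf_sq[of k] kl by auto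
      obtain a'' b'' s' where B: "s' > 0" "Qf l = sq a'' b'' s'" "tk l \<le> a'' + s'" using Qf_sq[of l] kl by auto
      have "sq a' b' s = sq a'' b'' s'" using A B kl by simp
      then have "a' = a'' \<and> s = s'" using cbox_pair_eq[of a' "a' + s" b' "b' + s" a'' b'' "a'' + s'" "b'' + s'"] A(1)
        by (simp add: sq_def)
      then have "tk l - tk k \<le> d" using A B by linarith
      moreover have "1 \<le> real l - real k" using kl by linarith
      then have "1 * (d + \<epsilon>) \<le> (real l - real k) * (d + \<epsilon>)" using d epos by (intro mult_right_mono) auto
      then have "d + \<epsilon> \<le> tk l - tk k" by (simp add: tk_def algebra_simps)
      ultimately show False using epos by linarith
    qed
    fix k l assume "k \<in> {..<\<eta>}" "l \<in> {..<\<eta>}" "Qf k = Qf l"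
    then show "k = l" using aux[of k l] aux[of l k] by (cases k l rule: linorder_cases) auto
  qed
  have finD: "finite D" using finU DU finite_subset by blast
  have cardD: "\<eta> \<le> card D"
  proof -
    have "Qf ` {..<\<eta>} \<subseteq> D" using Qf_sq by blast
    then have "card (Qf ` {..<\<eta>}) \<le> card D" using finD by (rule card_mono[rotated])
    then show ?thesis using card_image[OF injQ] by simp
  qed

  have Rext: "ext R = (\<lambda>i. sq (x + d + real i * d) y d) ` {..<\<eta>}"
    using ext_wide[OF d eta, of "x + d" y] by (simp add: R_def)
  have finER: "finite (ext R)" using Rext by simp
  have cardER: "card (ext R) \<le> \<eta>" using Rext card_image_le[of "{..<\<eta>}"] by simp
  have extR_valid: "valid_square reg Q" if QQ: "Q \<in> ext R" for Q
  proof -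
    have "Q \<subseteq> R" using ext_sub[OF QQ] by blast
    moreover obtain i where "Q = sq (x + d + real i * d) y d" using QQ Rext by blast
    ultimately show ?thesis using R_reg d unfolding valid_square_def by blast
  qed
  have int_sq_ne: "interior (sq a' b' s) \<noteq> {}" if "s > 0" for a' b' s
  proof -
    have "(a' + s / 2, b' + s / 2) \<in> interior (sq a' b' s)" using that by (simp add: sq_def box_Pair_real)
    then show ?thesis by blast
  qed
  have RBx: "R \<subseteq> Bx" using d by (auto simp: R_def Bx_def cbox_Pair_real)
  have UextR_D: "Q \<in> D" if QQ: "Q \<in> U" "Q \<in> ext R" for Q
  proof -
    have QR: "Q \<subseteq> R" using ext_sub[OF QQ(2)] by blast
    obtain a' b' s where Qs: "s > 0" "Q = sq a' b' s" using sqU[OF QQ(1)] by blast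
    have "interior Q \<subseteq> interior R" using QR by (rule interior_mono)
    then have "overlaps R Q" using int_sq_ne[OF Qs(1), of a' b'] Qs unfolding overlaps_def by blast
    then show ?thesis using QQ(1) QR RBx by (auto simp: D_def)
  qed
  have SU: "sq x y d \<in> U"
  proof -
    have "sq x y d \<in> ext (sq x y d)" using ext_sq[OF d] by simp
    then show ?thesis using S_in subR by (auto simp: U_def)
  qed
  have SnD: "sq x y d \<notin> D"
  proof
    assume "sq x y d \<in> D"
    then have "interior R \<inter> interior (sq x y d) \<noteq> {}" by (simp add: D_def overlaps_def)
    then obtain z where "z \<in> box (x + d, y) (x + d + real \<eta> * d, y + d)" "z \<in> box (x, y) (x + d, y + d)"
      by (auto simp: intR sq_def)
    then show False by (cases z) (auto simp: box_Pair_real)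
  qed
  have RnD: "ext R' \<inter> D = {}" if "R' \<in> \<R>" for R'
  proof (rule ccontr)
    assume "ext R' \<inter> D \<noteq> {}"
    then obtain Q where Q: "Q \<in> ext R'" "Q \<in> D" by blast
    have "Q \<subseteq> R'" using ext_sub[OF Q(1)] by blast
    then have "interior Q \<subseteq> interior R'" by (rule interior_mono)
    moreover have "interior R \<inter> interior Q \<noteq> {}" using Q(2) by (simp add: D_def overlaps_def)
    ultimately have "overlaps R R'" unfolding overlaps_def by blast
    then show False using no_ov that by (simp add: R_def)
  qed
  define keep where "keep = {R' \<in> Rs'. ext R' \<inter> D = {}}"
  define sing where "sing = {Q \<in> U - D. \<exists>R'\<in>Rs'. Q \<in> ext R' \<and> ext R' \<inter> D \<noteq> {}}"
  define Rs2 where "Rs2 = insert R (keep \<union> sing)"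
  define U' where "U' = (U - D) \<union> ext R"
  have extsing: "ext Q = {Q}" if "Q \<in> sing" for Q using that extU by (auto simp: sing_def)
  have extU_sub: "ext R' \<subseteq> U" if "R' \<in> Rs'" for R' using that by (auto simp: U_def)
  have unRs2: "(\<Union>A\<in>Rs2. ext A) = U'"
  proof
    show "(\<Union>A\<in>Rs2. ext A) \<subseteq> U'"
    proof
      fix Q assume "Q \<in> (\<Union>A\<in>Rs2. ext A)"
      then obtain A where A: "A \<in> Rs2" "Q \<in> ext A" by blast
      show "Q \<in> U'"
      proof (cases "A = R")
        case True then show ?thesis using A(2) unfolding U'_def by blast
      next
        case False
        then have "A \<in> keep \<or> A \<in> sing" using A by (simp add: Rs2_def)
        then show ?thesis
        proof
          assume Ak: "A \<in> keep"
          then have "ext A \<subseteq> U" "ext A \<inter> D = {}" using extU_sub unfolding keep_def by auto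
          then show ?thesis using A(2) unfolding U'_def by blast
        next
          assume As: "A \<in> sing"
          then have "Q = A" using A(2) extsing by blast
          moreover have "A \<in> U - D" using As unfolding sing_def by blast
          ultimately show ?thesis unfolding U'_def by blast
        qed
      qed
    qed
    show "U' \<subseteq> (\<Union>A\<in>Rs2. ext A)"
    proof
      fix Q assume "Q \<in> U'"
      then consider "Q \<in> ext R" | "Q \<in> U" "Q \<notin> D" by (auto simp: U'_def)
      then show "Q \<in> (\<Union>A\<in>Rs2. ext A)"
      proof cases
        case 1 then show ?thesis by (auto simp: Rs2_def)
      next
        case 2
        then obtain R' where R': "R' \<in> Rs'" "Q \<in> ext R'" by (auto simp: U_def)
        show ?thesis
        proof (cases "ext R' \<inter> D = {}")
          case True
          then have "R' \<in> Rs2" using R' unfolding Rs2_def keep_def by blast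
          then show ?thesis using R' by blast
        next
          case False
          then have "Q \<in> sing" using R' 2 unfolding sing_def by blast
          then have "Q \<in> Rs2" "Q \<in> ext Q" using extsing unfolding Rs2_def by auto
          then show ?thesis by blast
        qed
      qed
    qed
  qed

  have d1: "ext R \<inter> ext B = {}" if B: "B \<in> keep \<union> sing" for B
  proof (rule ccontr)
    assume "ext R \<inter> ext B \<noteq> {}"
    then obtain Q where Q: "Q \<in> ext R" "Q \<in> ext B" by blast
    from B show False
    proof
      assume Bk: "B \<in> keep"
      then have "Q \<in> U" "ext B \<inter> D = {}" using Q(2) extU_sub unfolding keep_def by auto
      then show False using UextR_D[OF _ Q(1)] Q(2) by blast
    next
      assume Bs: "B \<in> sing"
      then have "Q = B" using Q(2) extsing by blast
      moreover have "B \<in> U - D" using Bs unfolding sing_def by blast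
      ultimately show False using UextR_D[OF _ Q(1)] by blast
    qed
  qed
  have d2: "ext A \<inter> ext B = {}" if A: "A \<in> keep" and B: "B \<in> keep \<union> sing" and AB: "A \<noteq> B" for A B
  proof (rule ccontr)
    assume "ext A \<inter> ext B \<noteq> {}"
    then obtain Q where Q: "Q \<in> ext A" "Q \<in> ext B" by blast
    have ARs: "A \<in> Rs'" "ext A \<inter> D = {}" using A unfolding keep_def by auto
    from B show False
    proof
      assume "B \<in> keep"
      then have "B \<in> Rs'" unfolding keep_def by auto
      then show False using disjRs[OF ARs(1) _ AB] Q by blast
    next
      assume Bs: "B \<in> sing"
      then have "Q = B" using Q(2) extsing by blast
      obtain R'' where R'': "R'' \<in> Rs'" "B \<in> ext R''" "ext R'' \<inter> D \<noteq> {}" using Bs unfolding sing_def by blast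
      have "R'' \<noteq> A" using R''(3) ARs(2) by blast
      then show False using disjRs[OF ARs(1) R''(1)] Q(1) \<open>Q = B\<close> R''(2) by blast
    qed
  qed
  have d3: "ext A \<inter> ext B = {}" if A: "A \<in> sing" and B: "B \<in> sing" and AB: "A \<noteq> B" for A B
    using extsing[OF A] extsing[OF B] AB by simp
  have disj2: "ext A \<inter> ext B = {}" if A: "A \<in> Rs2" and B: "B \<in> Rs2" and AB: "A \<noteq> B" for A B
  proof -
    consider "A = R" "B \<in> keep \<union> sing" | "B = R" "A \<in> keep \<union> sing" | "A \<in> keep \<union> sing" "B \<in> keep \<union> sing"
      using A B AB unfolding Rs2_def by blast
    then show ?thesis
    proof cases
      case 1 then show ?thesis using d1 by blast
    next
      case 2 then show ?thesis using d1[of A] by blast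
    next
      case 3
      then consider "A \<in> keep" | "B \<in> keep" | "A \<in> sing" "B \<in> sing" by blast
      then show ?thesis
      proof cases
        case 1 then show ?thesis using d2[OF _ _ AB] 3 by blast
      next
        case 2 then show ?thesis using d2[of B A] 3 AB by blast
      next
        case 3 then show ?thesis using d3 AB by blast
      qed
    qed
  qed
  have rp2: "recpack reg A" if A: "A \<in> Rs2" for A
  proof -
    have "A = R \<or> A \<in> keep \<or> A \<in> sing" using A unfolding Rs2_def by blast
    then show ?thesis
    proof (elim disjE)
      assume "A = R"
      have "R = cbox (x + d, y) ((x + d) + real \<eta> * d, y + d)" by (simp add: R_def)
      then have "\<exists>a b t (k::nat). t > 0 \<and> k \<ge> 1 \<and>
        (R = cbox (a, b) (a + real k * t, b + t) \<or> R = cbox (a, b) (a + t, b + real k * t))"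
        using d eta by blast
      then show ?thesis unfolding recpack_def using R_reg \<open>A = R\<close> by blast
    next
      assume "A \<in> keep" then show ?thesis using rpRs unfolding keep_def by blast
    next
      assume "A \<in> sing" then have "A \<in> U" unfolding sing_def by blast
      then show ?thesis using validU recpack_sq by blast
    qed
  qed
  have finU': "finite U'" using finU finER by (simp add: U'_def)
  have validU': "\<forall>Q\<in>U'. valid_square reg Q" using validU extR_valid by (auto simp: U'_def)
  have unU': "\<Union>U' = reg"
  proof
    show "\<Union>U' \<subseteq> reg" using validU' unfolding valid_square_def by blast
    show "reg \<subseteq> \<Union>U'"
    proof
      fix z assume "z \<in> reg"
      then obtain Q where Q: "Q \<in> U" "z \<in> Q" using unU by blast
      show "z \<in> \<Union>U'"
      proof (cases "Q \<in> D")
        case False then show ?thesis using Q unfolding U'_def by blast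
      next
        case True
        then have zB: "z \<in> Bx" using Q(2) unfolding D_def by blast
        obtain p h where ph: "z = (p, h)" by (cases z)
        have zz: "x \<le> p" "p \<le> x + d + real \<eta> * d" "y \<le> h" "h \<le> y + d"
          using zB ph by (auto simp: Bx_def cbox_Pair_real)
        show ?thesis
        proof (cases "p \<le> x + d")
          case True
          then have "z \<in> sq x y d" using zz ph by (simp add: sq_def cbox_Pair_real)
          moreover have "sq x y d \<in> U'" using SU SnD unfolding U'_def by blast
          ultimately show ?thesis by blast
        next
          case False
          define r where "r = (p - (x + d)) / d"
          have r0: "0 \<le> r" using False d by (simp add: r_def)
          have "p - (x + d) \<le> real \<eta> * d" using zz by linarith
          then have r1: "r \<le> real \<eta>" using d by (simp add: r_def divide_le_eq)
          obtain i where i: "i < \<eta>" "real i \<le> r" "r \<le> real i + 1" using idx_exists[OF r0 r1 eta] by blast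
          have pr: "p = x + d + r * d" using d by (simp add: r_def)
          have "real i * d \<le> r * d" "r * d \<le> (real i + 1) * d" using i d by (auto intro: mult_right_mono)
          then have "z \<in> sq (x + d + real i * d) y d" using zz ph pr by (simp add: sq_def cbox_Pair_real algebra_simps)
          moreover have "sq (x + d + real i * d) y d \<in> U'" using i Rext unfolding U'_def by blast
          ultimately show ?thesis by blast
        qed
      qed
    qed
  qed
  have cardU': "card U' \<le> card U"
  proof -
    have "card U' \<le> card (U - D) + card (ext R)" unfolding U'_def by (rule card_Un_le)
    moreover have "card (U - D) = card U - card D" using card_Diff_subset[OF finD DU] .
    moreover have "card D \<le> card U" using card_mono[OF finU DU] .
    ultimately show ?thesis using cardER cardD by linarith
  qed
  have minU': "\<forall>V. finite V \<and> (\<forall>Q\<in>V. valid_square reg Q) \<and> \<Union>V = reg \<longrightarrow> card U' \<le> card V"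
  proof (intro allI impI)
    fix V assume "finite V \<and> (\<forall>Q\<in>V. valid_square reg Q) \<and> \<Union>V = reg"
    then have "card U \<le> card V" using minU by blast
    then show "card U' \<le> card V" using cardU' by linarith
  qed
  have msc2: "min_square_cover reg U'"
    unfolding min_square_cover_def using finU' validU' unU' minU' by blast
  have mc2: "min_covering reg Rs2"
    unfolding min_covering_def unRs2 using rp2 disj2 msc2 by blast
  have sub2: "insert R \<R> \<subseteq> Rs2"
    using subR RnD unfolding Rs2_def keep_def by blast
  show ?thesis unfolding partial_solution_def using mc2 sub2 by (auto simp: reg_def R_def)
qed

end
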